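(* Suppose that, for each $x$, the function $p(x\mid\cdot)$ is an element of an RKHS $\mathbb H_{K_{\mathcal F}}$, and $h\in\mathcal H$ satisfies $|h(x)|\le\kappa(x)\|h\|_{\mathcal H}$ for some $\kappa:\mathcal X\to\mathbb R$. If $L:=\int\kappa(x)\,\|p(x\mid\cdot)\|_{K_{\mathcal F}}\,dx<\infty$, then $Th\in\mathbb H_{K_{\mathcal F}}$ with $\|Th\|_{K_{\mathcal F}}\le L\|h\|_{\mathcal H}$.
   Context: $p(x\mid z)$ is the conditional density of $x$ given $z$ and $(Th)(z)=\mathbb E[h(x)\mid z]=\int h(x)p(x\mid z)dx$. $\mathcal H$ is a normed function class on $\mathcal X$ with norm $\|\cdot\|_{\mathcal H}$; $\|\cdot\|_{K_{\mathcal F}}$ is the norm of the RKHS $\mathbb H_{K_{\mathcal F}}$ of functions on $\mathcal Z$ with kernel $K_{\mathcal F}$. *)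

theory Defs
  imports "HOL-Analysis.Analysis"
begin

(* linearity of a map into real-valued functions (function spaces are not a vector type class) *)
definition linear_to_funs :: "('a::real_vector \<Rightarrow> 'x \<Rightarrow> real) \<Rightarrow> bool" where
  "linear_to_funs E \<longleftrightarrow> (\<forall>f g x. E (f + g) x = E f x + E g x) \<and> (\<forall>c f x. E (c *\<^sub>R f) x = c * E f x)"

(* An RKHS with kernel K on 'z is modelled as a real Hilbert space 'h together with an
   injective linear map emb :: 'h => ('z => real) identifying its elements with functions,
   such that every section K(.,z) belongs to the space and has the reproducing property
   g(z) = <g, K(.,z)>.  This determines H_K uniquely (up to the identification). *)
definition is_rkhs :: "('z \<Rightarrow> 'z \<Rightarrow> real) \<Rightarrow> ('h::{real_inner,complete_space} \<Rightarrow> 'z \<Rightarrow> real) \<Rightarrow> bool" where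
  "is_rkhs K emb \<longleftrightarrow> linear_to_funs emb \<and> inj emb \<and>
     (\<forall>z. \<exists>kz. emb kz = (\<lambda>w. K w z) \<and> (\<forall>g. emb g z = inner g kz))"

(* membership g \<in> H_K is  g \<in> range emb ; the RKHS norm of a member: *)
definition rkhs_norm :: "('h::real_normed_vector \<Rightarrow> 'z \<Rightarrow> real) \<Rightarrow> ('z \<Rightarrow> real) \<Rightarrow> real" where
  "rkhs_norm emb g = norm (inv emb g)"

definition is_normed_fun_class :: "('a::real_normed_vector \<Rightarrow> 'x \<Rightarrow> real) \<Rightarrow> bool" where
  "is_normed_fun_class E \<longleftrightarrow> linear_to_funs E \<and> inj E"

end

theory Submission imports Defs begin
lemma A5: fixes m c x y N p q :: real
  shows "m \<le> c \<Longrightarrow> x + y - 2 * c = N / 4 \<Longrightarrow> x < m + p \<Longrightarrow> y < m + q \<Longrightarrow> N \<le> 4 * (p + q)"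
  by argo
lemma A6: fixes N e p q :: real shows "p < e/8 \<Longrightarrow> q < e/8 \<Longrightarrow> N \<le> 4 * (p + q) \<Longrightarrow> N < e" by argo
lemma A1: "8 / e^2 < (x::real) + 1 \<Longrightarrow> 0 < e^2 \<Longrightarrow> 0 \<le> x \<Longrightarrow> 1 / (x + 1) < e^2 / 8"
proof -
  assume h: "8 / e^2 < (x::real) + 1" "0 < e^2" "0 \<le> x"
  then have "8 < (x+1) * e^2" by (simp add: divide_less_eq)
  then show ?thesis using h by (simp add: divide_less_eq mult.commute)
qed
lemma A2: fixes a d :: real assumes "\<And>t. 0 \<le> t*d + t^2/2*a" "0 \<le> a" shows "d = 0"
proof (rule ccontr)
  assume d: "d \<noteq> 0"
  define t where "t = - d / (a + 1)"
  have dt: "d = - t * (a + 1)" unfolding t_def using assms(2) by (simp add: field_simps)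
  have "0 \<le> t*d + t^2/2*a" by (rule assms(1))
  also have "t*d + t^2/2*a = t^2 * (- (a+1) + a/2)"
    unfolding dt by (simp add: power2_eq_square algebra_simps)
  also have "... < 0" using d assms(2) unfolding t_def
    by (intro mult_pos_neg) auto
  finally show False by simp
qed
lemma A3: fixes x f :: "'a::real_inner"
  shows "(norm (x + t *\<^sub>R f))\<^sup>2 = (norm x)\<^sup>2 + 2 * t * inner x f + t^2 * (norm f)\<^sup>2"
  unfolding power2_norm_eq_inner
  by (simp add: inner_add_left inner_add_right inner_commute power2_eq_square algebra_simps)
lemma A4: fixes a b :: "'a::real_inner"
  shows "(norm ((1/2) *\<^sub>R (a + b)))\<^sup>2 = ((norm a)\<^sup>2 + 2 * inner a b + (norm b)\<^sup>2) / 4"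
    and "(norm (a - b))\<^sup>2 = (norm a)\<^sup>2 - 2 * inner a b + (norm b)\<^sup>2"
  by (simp_all add: power2_norm_eq_inner inner_add_left inner_add_right inner_diff_left inner_diff_right inner_commute algebra_simps)

lemma riesz_sub:
  fixes S :: "'h::{real_inner,complete_space} set" and \<phi> :: "'h \<Rightarrow> real"
  assumes S0: "0 \<in> S" and Sadd: "\<And>a b. a \<in> S \<Longrightarrow> b \<in> S \<Longrightarrow> a + b \<in> S"
    and Ssc: "\<And>c a. a \<in> S \<Longrightarrow> c *\<^sub>R a \<in> S"
    and padd: "\<And>a b. a \<in> S \<Longrightarrow> b \<in> S \<Longrightarrow> \<phi> (a + b) = \<phi> a + \<phi> b"
    and psc: "\<And>c a. a \<in> S \<Longrightarrow> \<phi> (c *\<^sub>R a) = c * \<phi> a"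
    and pb: "\<And>a. a \<in> S \<Longrightarrow> \<bar>\<phi> a\<bar> \<le> C * norm a"
    and C0: "0 \<le> C"
  shows "\<exists>g. (\<forall>f\<in>S. inner g f = \<phi> f) \<and> norm g \<le> C"
proof -
  define J where "J f = (norm f)\<^sup>2 / 2 - \<phi> f" for f
  define m where "m = Inf (J ` S)"
  have Jlow: "- C\<^sup>2 / 2 \<le> J f" if "f \<in> S" for f
  proof -
    have "\<phi> f \<le> C * norm f" using pb[OF that] by linarith
    moreover have "0 \<le> (norm f - C)\<^sup>2" by simp
    ultimately show ?thesis unfolding J_def by (simp add: power2_eq_square algebra_simps)
  qed
  have bdd: "bdd_below (J ` S)" using Jlow by (auto intro!: bdd_belowI)
  have mle: "m \<le> J f" if "f \<in> S" for f
    unfolding m_def using bdd that by (simp add: cInf_lower)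
  have "\<forall>n. \<exists>f. f \<in> S \<and> J f < m + 1 / (real n + 1)"
  proof
    fix n
    have pos: "0 < 1 / (real n + 1)" by simp
    have lt: "Inf (J ` S) < m + 1 / (real n + 1)" using pos unfolding m_def by linarith
    have ne: "J ` S \<noteq> {}" using S0 by auto
    from cInf_lessD[OF ne lt] obtain y where "y \<in> J ` S" "y < m + 1 / (real n + 1)" by blast
    then show "\<exists>f. f \<in> S \<and> J f < m + 1 / (real n + 1)" by auto
  qed
  then obtain F where FS: "\<And>n. F n \<in> S" and FJ: "\<And>n. J (F n) < m + 1 / (real n + 1)"
    by metis
  have ident: "J a + J b - 2 * J ((1/2) *\<^sub>R (a + b)) = (norm (a - b))\<^sup>2 / 4"
    if "a \<in> S" "b \<in> S" for a b
  proof -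
    have "\<phi> ((1/2) *\<^sub>R (a + b)) = (\<phi> a + \<phi> b) / 2"
      using psc[OF Sadd[OF that]] padd[OF that] by simp
    then show ?thesis unfolding J_def A4 by (simp add: field_simps)
  qed
  have Fd: "(norm (F i - F j))\<^sup>2 \<le> 4 * (1 / (real i + 1) + 1 / (real j + 1))" for i j
  proof -
    have "m \<le> J ((1/2) *\<^sub>R (F i + F j))" using mle Ssc Sadd FS by blast
    then show ?thesis using ident[OF FS FS, of i j] FJ[of i] FJ[of j] by (rule A5)
  qed
  have "Cauchy F"
  proof (rule metric_CauchyI)
    fix e :: real assume e: "0 < e"
    obtain N :: nat where N: "8 / (e^2) < real N" using reals_Archimedean2 by blast
    have "\<forall>i\<ge>N. \<forall>j\<ge>N. dist (F i) (F j) < e"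
    proof (intro allI impI)
      fix i j assume ij: "N \<le> i" "N \<le> j"
      have e2: "0 < e^2" using e by simp
      have "1 / (real i + 1) < e^2 / 8"
      proof -
        have "8 / e^2 < real i + 1" using N ij by linarith
        then show ?thesis using e2 by (intro A1) auto
      qed
      moreover have "1 / (real j + 1) < e^2 / 8"
      proof -
        have "8 / e^2 < real j + 1" using N ij by linarith
        then show ?thesis using e2 by (intro A1) auto
      qed
      ultimately have "(norm (F i - F j))\<^sup>2 < e^2" using Fd[of i j] by (rule A6)
      then have "norm (F i - F j) < e" using e by (simp add: power_less_imp_less_base)
      then show "dist (F i) (F j) < e" by (simp add: dist_norm)
    qed
    then show "\<exists>N. \<forall>i\<ge>N. \<forall>j\<ge>N. dist (F i) (F j) < e" by blast
  qed
  then obtain g where Fg: "F \<longlonglongrightarrow> g" using Cauchy_convergent_iff convergent_def by blast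
  have JF: "(\<lambda>n. J (F n)) \<longlonglongrightarrow> m"
  proof (rule real_tendsto_sandwich[where f="\<lambda>n. m" and h="\<lambda>n. m + 1 / (real n + 1)"])
    show "\<forall>\<^sub>F n in sequentially. m \<le> J (F n)" using mle[OF FS] by (intro always_eventually allI) 
    show "\<forall>\<^sub>F n in sequentially. J (F n) \<le> m + 1 / (real n + 1)" using FJ by (intro always_eventually allI less_imp_le) 
    show "(\<lambda>n. m) \<longlonglongrightarrow> m" by simp
    have "(\<lambda>n. 1 / (real n + 1)) \<longlonglongrightarrow> 0" using LIMSEQ_inverse_real_of_nat by (simp add: inverse_eq_divide add.commute)
    then show "(\<lambda>n. m + 1 / (real n + 1)) \<longlonglongrightarrow> m" using tendsto_add[of "\<lambda>n. m" m] by fastforce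
  qed
  have foc: "inner g f = \<phi> f" if fS: "f \<in> S" for f
  proof -
    define d where "d = inner g f - \<phi> f"
    define a where "a = (norm f)\<^sup>2"
    have key: "0 \<le> t * d + t^2 / 2 * a" for t
    proof -
      have exp: "J (F n + t *\<^sub>R f) = J (F n) + t * (inner (F n) f - \<phi> f) + t^2/2 * a" for n
      proof -
        have "\<phi> (F n + t *\<^sub>R f) = \<phi> (F n) + t * \<phi> f" using padd[OF FS Ssc[OF fS]] psc[OF fS] by simp
        then show ?thesis unfolding J_def A3 a_def by (simp add: field_simps)
      qed
      have lim: "(\<lambda>n. J (F n + t *\<^sub>R f)) \<longlonglongrightarrow> m + t * d + t^2/2 * a"
        unfolding exp d_def
        by (intro tendsto_intros JF Fg)
      have "m \<le> m + t * d + t^2/2 * a"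
        by (rule LIMSEQ_le_const[OF lim]) (use mle FS Sadd Ssc fS in blast)
      then show ?thesis by simp
    qed
    have a0: "0 \<le> a" unfolding a_def by simp
    have "d = 0" using A2[OF key a0] .
    then show ?thesis unfolding d_def by simp
  qed
  have "norm g \<le> C"
  proof -
    have l1: "(\<lambda>n. inner g (F n)) \<longlonglongrightarrow> inner g g" by (intro tendsto_intros Fg)
    have l2: "(\<lambda>n. C * norm (F n)) \<longlonglongrightarrow> C * norm g" by (intro tendsto_intros Fg)
    have "inner g g \<le> C * norm g"
      by (rule LIMSEQ_le[OF l1 l2]) (use foc FS pb in \<open>metis abs_ge_self order_trans\<close>)
    then have "(norm g)^2 \<le> C * norm g" by (simp add: power2_norm_eq_inner)
    then show ?thesis using C0
      by (cases "norm g = 0") (auto simp: power2_eq_square)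
  qed
  then show ?thesis using foc by blast
qed
theorem lemma1:
  fixes M :: "'x measure"
    and K :: "'z \<Rightarrow> 'z \<Rightarrow> real"
    and emb :: "'h::{real_inner,complete_space} \<Rightarrow> 'z \<Rightarrow> real"
    and E :: "'a::real_normed_vector \<Rightarrow> 'x \<Rightarrow> real"
    and hh :: 'a
    and p :: "'x \<Rightarrow> 'z \<Rightarrow> real"
    and \<kappa> :: "'x \<Rightarrow> real"
  assumes "is_rkhs K emb"
    and "is_normed_fun_class E"
    and "\<forall>x\<in>space M. p x \<in> range emb"
    and "\<forall>x\<in>space M. \<bar>E hh x\<bar> \<le> \<kappa> x * norm hh"
    and "E hh \<in> borel_measurable M"
    and "\<forall>z. (\<lambda>x. p x z) \<in> borel_measurable M"
    and "integrable M (\<lambda>x. \<kappa> x * rkhs_norm emb (p x))"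
  shows "(\<lambda>z. \<integral>x. E hh x * p x z \<partial>M) \<in> range emb \<and>
         rkhs_norm emb (\<lambda>z. \<integral>x. E hh x * p x z \<partial>M)
           \<le> (\<integral>x. \<kappa> x * rkhs_norm emb (p x) \<partial>M) * norm hh"
proof -
  note A = assms
  have linE: "linear_to_funs emb" and injE: "inj emb"
    using A(1) unfolding is_rkhs_def by auto
  have "\<forall>z. \<exists>kz. emb kz = (\<lambda>w. K w z) \<and> (\<forall>g. emb g z = inner g kz)"
    using A(1) unfolding is_rkhs_def by auto
  then obtain k where k: "\<And>z g. emb g z = inner g (k z)"
    by metis
  define q where "q x = inv emb (p x)" for x
  have qp: "emb (q x) = p x" if "x \<in> space M" for x
    unfolding q_def using A(3) that by (simp add: f_inv_into_f)
  have rn: "rkhs_norm emb (p x) = norm (q x)" for x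
    unfolding rkhs_norm_def q_def ..
  define L where "L = (\<integral>x. \<kappa> x * norm (q x) \<partial>M)"
  have intL: "integrable M (\<lambda>x. \<kappa> x * norm (q x))" using A(7) unfolding rn .
  define G where "G = (\<lambda>z. \<integral>x. E hh x * p x z \<partial>M)"
  have goal: "G \<in> range emb \<and> rkhs_norm emb G \<le> L * norm hh"
  proof (cases "hh = 0")
    case True
    have E0: "E hh x = 0" for x
    proof -
      have "E (0 *\<^sub>R hh) x = 0 * E hh x" using A(2) unfolding is_normed_fun_class_def linear_to_funs_def by blast
      then show ?thesis using True by simp
    qed
    have e0: "emb 0 = G"
    proof
      fix z
      have "emb (0 *\<^sub>R 0) z = 0 * emb 0 z" using linE unfolding linear_to_funs_def by blast
      then show "emb 0 z = G z" unfolding G_def E0 by simp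
    qed
    have "rkhs_norm emb G = 0" unfolding rkhs_norm_def e0[symmetric] using injE by simp
    then show ?thesis using e0 True by auto
  next
    case False
    then have nh: "0 < norm hh" by simp
    have kap: "0 \<le> \<kappa> x" if "x \<in> space M" for x
    proof -
      have "0 \<le> \<kappa> x * norm hh" using A(4) that by (meson abs_ge_zero order_trans)
      then show ?thesis using nh by (simp add: zero_le_mult_iff)
    qed
    have L0: "0 \<le> L" unfolding L_def using kap by (intro integral_nonneg_AE AE_I2) simp
    define S where "S = {f. (\<lambda>x. inner (q x) f) \<in> borel_measurable M}"
    define \<phi> where "\<phi> f = (\<integral>x. E hh x * inner (q x) f \<partial>M)" for f
    have bnd: "\<bar>E hh x * inner (q x) f\<bar> \<le> \<kappa> x * norm (q x) * (norm hh * norm f)"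
      if "x \<in> space M" for x f
    proof -
      have "\<bar>E hh x * inner (q x) f\<bar> = \<bar>E hh x\<bar> * \<bar>inner (q x) f\<bar>" by (simp add: abs_mult)
      also have "\<dots> \<le> (\<kappa> x * norm hh) * (norm (q x) * norm f)"
        using A(4) that Cauchy_Schwarz_ineq2 by (intro mult_mono) auto
      finally show ?thesis by (simp add: algebra_simps)
    qed
    have intf: "integrable M (\<lambda>x. E hh x * inner (q x) f)" if "f \<in> S" for f
    proof (rule Bochner_Integration.integrable_bound)
      show "integrable M (\<lambda>x. \<kappa> x * norm (q x) * (norm hh * norm f))"
        using intL by (rule integrable_mult_left)
      show "(\<lambda>x. E hh x * inner (q x) f) \<in> borel_measurable M"
        using that A(5) unfolding S_def by (intro borel_measurable_times) auto
      show "AE x in M. norm (E hh x * inner (q x) f) \<le> norm (\<kappa> x * norm (q x) * (norm hh * norm f))"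
        using bnd kap by (intro AE_I2) (auto intro: order_trans)
    qed
    have "\<exists>g. (\<forall>f\<in>S. inner g f = \<phi> f) \<and> norm g \<le> L * norm hh"
    proof (rule riesz_sub)
      show "0 \<in> S" unfolding S_def by simp
      show "a + b \<in> S" if "a \<in> S" "b \<in> S" for a b
        using that unfolding S_def by (simp add: inner_add_right borel_measurable_add)
      show "c *\<^sub>R a \<in> S" if "a \<in> S" for c a
        using that unfolding S_def by (simp add: borel_measurable_times)
      show "\<phi> (a + b) = \<phi> a + \<phi> b" if "a \<in> S" "b \<in> S" for a b
        unfolding \<phi>_def using intf[OF that(1)] intf[OF that(2)]
        by (simp add: inner_add_right distrib_left)
      show "\<phi> (c *\<^sub>R a) = c * \<phi> a" if "a \<in> S" for c a
      proof -
        have "\<phi> (c *\<^sub>R a) = (\<integral>x. c * (E hh x * inner (q x) a) \<partial>M)"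
          unfolding \<phi>_def by (simp add: algebra_simps)
        then show ?thesis unfolding \<phi>_def by simp
      qed
      show "\<bar>\<phi> a\<bar> \<le> L * norm hh * norm a" if "a \<in> S" for a
      proof -
        have "\<bar>\<phi> a\<bar> \<le> (\<integral>x. norm (E hh x * inner (q x) a) \<partial>M)"
          unfolding \<phi>_def using integral_norm_bound by (metis real_norm_def)
        also have "\<dots> \<le> (\<integral>x. \<kappa> x * norm (q x) * (norm hh * norm a) \<partial>M)"
          using intf[OF that] intL bnd
          by (intro integral_mono) (auto intro: integrable_norm integrable_mult_left)
        also have "\<dots> = L * norm hh * norm a" 
        proof -
          have eq: "(\<integral>x. \<kappa> x * norm (q x) * (norm hh * norm a) \<partial>M) = L * (norm hh * norm a)"
            unfolding L_def by (rule integral_mult_left_zero)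
          then show ?thesis by (metis mult.assoc)
        qed
        finally show ?thesis .
      qed
      show "0 \<le> L * norm hh" using L0 by simp
    qed
    then obtain g where g: "\<And>f. f \<in> S \<Longrightarrow> inner g f = \<phi> f" and gn: "norm g \<le> L * norm hh"
      by blast
    have kS: "k z \<in> S" for z
    proof -
      have "(\<lambda>x. p x z) \<in> borel_measurable M" using A(6) by blast
      moreover have "\<And>x. x \<in> space M \<Longrightarrow> p x z = inner (q x) (k z)"
        using k qp by metis
      ultimately have "(\<lambda>x. inner (q x) (k z)) \<in> borel_measurable M"
        using measurable_cong by force
      then show ?thesis unfolding S_def by simp
    qed
    have eg: "emb g = G"
    proof
      fix z
      have "emb g z = \<phi> (k z)" using k g kS by simp
      also have "\<dots> = G z" unfolding \<phi>_def G_def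
        by (intro Bochner_Integration.integral_cong) (simp_all add: k[symmetric] qp)
      finally show "emb g z = G z" .
    qed
    have "rkhs_norm emb G = norm g" unfolding rkhs_norm_def eg[symmetric] using injE by simp
    then show ?thesis using eg gn by auto
  qed
  then show ?thesis unfolding G_def L_def rn .
qed

end
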